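(* Let $i\in\mathbb{N}=\{0,1,2,\dots\}$ and let $w\in\{0,1\}^*$ be a $\frac{7}{3}$-power-free word with $|w|=5\cdot 2^i-1$. Let $a\in\{0,1\}$. Then the word $waw$ has a subword $x$ with $|x|\leq 5\cdot 2^i$ such that $x$ is a $\beta$-power for some rational $\beta\ge\frac{7}{3}$.
   Context: A word $w'$ is a subword of $w$ if $w=uw'v$ for some words $u,v$. For a rational $\beta\ge 1$, a $\beta$-power is a word of the form $y^ny'$ with $y$ a nonempty word, $y'$ a prefix of $y$, $n$ a nonnegative integer and $n+|y'|/|y|=\beta$. A word is $\alpha$-power-free if none of its subwords is a $\beta$-power for any rational $\beta\geq\alpha$. *)

theory Defs
  imports Complex_Main "HOL-Library.Sublist"
begin

text \<open>Words are lists; the binary alphabet is {0,1} :: nat.\<close>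

definition subword :: "'a list \<Rightarrow> 'a list \<Rightarrow> bool" where
  "subword x w \<longleftrightarrow> (\<exists>u v. w = u @ x @ v)"

definition is_power :: "rat \<Rightarrow> 'a list \<Rightarrow> bool" where
  "is_power \<beta> x \<longleftrightarrow> (\<exists>y y' n. y \<noteq> [] \<and> prefix y' y \<and>
      x = concat (replicate n y) @ y' \<and>
      of_nat n + of_nat (length y') / of_nat (length y) = \<beta>)"

definition power_free :: "rat \<Rightarrow> 'a list \<Rightarrow> bool" where
  "power_free \<alpha> w \<longleftrightarrow> (\<forall>x \<beta>. subword x w \<and> \<beta> \<ge> 1 \<and> \<beta> \<ge> \<alpha> \<longrightarrow> \<not> is_power \<beta> x)"

end

theory Submission
  imports Defs
begin


definition mu :: "nat list \<Rightarrow> nat list" where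
  "mu x = concat (map (\<lambda>c. [c, 1 - c]) x)"

lemma mu_append[simp]: "mu (x @ y) = mu x @ mu y" by (simp add: mu_def)
lemma mu_Nil[simp]: "mu [] = []" by (simp add: mu_def)
lemma mu_Cons[simp]: "mu (a # x) = [a, 1 - a] @ mu x" by (simp add: mu_def)
lemma length_mu[simp]: "length (mu x) = 2 * length x" by (induction x) auto

lemma mu_nth: "k < 2 * length x \<Longrightarrow> mu x ! k = (if even k then x ! (k div 2) else 1 - x ! (k div 2))"
proof (induction x arbitrary: k)
  case Nil then show ?case by simp
next
  case (Cons a x)
  consider (z) "k = 0" | (o) "k = 1" | (s) k' where "k = Suc (Suc k')"
    by (metis One_nat_def not0_implies_Suc)
  then show ?case
  proof cases
    case z then show ?thesis by simp
  next
    case o then show ?thesis by simp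
  next
    case s
    then have "k' < 2 * length x" using Cons.prems by simp
    then show ?thesis using Cons.IH[of k'] s by simp
  qed
qed

lemma mu_rep: "mu (concat (replicate n y)) = concat (replicate n (mu y))"
  by (induction n) auto

lemma power_mu: "is_power \<beta> x \<Longrightarrow> is_power \<beta> (mu x)"
proof -
  assume "is_power \<beta> x"
  then obtain y y' n where h: "y \<noteq> []" "prefix y' y" "x = concat (replicate n y) @ y'"
    "of_nat n + of_nat (length y') / of_nat (length y) = \<beta>" unfolding is_power_def by blast
  obtain z where z: "y = y' @ z" using h(2) prefix_def by blast
  have "prefix (mu y') (mu y)" using z by simp
  moreover have "mu y \<noteq> []" using h(1) by (cases y) auto
  moreover have "mu x = concat (replicate n (mu y)) @ mu y'" using h(3) by (simp add: mu_rep)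
  moreover have "of_nat n + of_nat (length (mu y')) / of_nat (length (mu y)) = \<beta>"
    using h(4) by simp
  ultimately show ?thesis unfolding is_power_def by blast
qed

lemma subword_mu: assumes "subword x y" shows "subword (mu x) (mu y)"
proof -
  obtain u v where "y = u @ x @ v" using assms unfolding subword_def by blast
  then have "mu y = mu u @ mu x @ mu v" by simp
  then show ?thesis unfolding subword_def by blast
qed

lemma subword_trans: assumes "subword x y" "subword y z" shows "subword x z"
proof -
  obtain u v where "y = u @ x @ v" using assms unfolding subword_def by blast
  moreover obtain u' v' where "z = u' @ y @ v'" using assms unfolding subword_def by blast
  ultimately have "z = (u' @ u) @ x @ (v @ v')" by simp
  then show ?thesis unfolding subword_def by blast
qed

lemma power_free_sub: "power_free \<alpha> z \<Longrightarrow> subword y z \<Longrightarrow> power_free \<alpha> y"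
  unfolding power_free_def using subword_trans by blast

lemma power_free_mu: assumes "power_free \<alpha> (mu y)" shows "power_free \<alpha> y"
  unfolding power_free_def
proof (intro allI impI notI)
  fix x \<beta> assume a: "subword x y \<and> 1 \<le> \<beta> \<and> \<alpha> \<le> \<beta>" "is_power \<beta> x"
  have "subword (mu x) (mu y)" using a subword_mu by blast
  moreover have "is_power \<beta> (mu x)" using a power_mu by blast
  ultimately show False using assms a unfolding power_free_def by blast
qed

lemma window0: "subword (take m (drop k s)) s"
  unfolding subword_def
  by (rule exI[of _ "take k s"], rule exI[of _ "drop m (drop k s)"]) (metis append_take_drop_id)

lemma window: "length x = m \<Longrightarrow> k + m \<le> length s \<Longrightarrow> (\<forall>q<m. x ! q = s ! (k + q)) \<Longrightarrow> subword x s"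
proof -
  assume a: "length x = m" "k + m \<le> length s" "\<forall>q<m. x ! q = s ! (k + q)"
  have l: "length (take m (drop k s)) = m" using a(2) by simp
  have xe: "x = take m (drop k s)"
  proof (rule nth_equalityI)
    show "length x = length (take m (drop k s))" using l a(1) by simp
    fix q assume "q < length x"
    then have q: "q < m" using a(1) by simp
    then have A: "take m (drop k s) ! q = s ! (k + q)" using a(2) by simp
    have B: "x ! q = s ! (k + q)" by (rule a(3)[rule_format, OF q])
    show "x ! q = take m (drop k s) ! q" by (simp only: A B)
  qed
  show ?thesis unfolding xe by (rule window0)
qed


lemma pow3: "is_power 3 [c, c, c]"
  unfolding is_power_def by (rule exI[of _ "[c]"], rule exI[of _ "[]"], rule exI[of _ 3]) (simp add: numeral_eq_Suc)
lemma pow5: "is_power (5/2) [a, b, a, b, a]"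
  unfolding is_power_def by (rule exI[of _ "[a,b]"], rule exI[of _ "[a]"], rule exI[of _ 2]) (simp add: numeral_eq_Suc)
lemma pow7: "is_power (7/3) [a, b, c, a, b, c, a]"
  unfolding is_power_def by (rule exI[of _ "[a,b,c]"], rule exI[of _ "[a]"], rule exI[of _ 2]) (simp add: numeral_eq_Suc)

lemma subword_sublist: "subword x w = sublist x w"
  unfolding subword_def sublist_def by blast

definition SP :: "nat \<Rightarrow> nat list \<Rightarrow> bool" where
  "SP p s \<longleftrightarrow> (\<exists>x \<beta>. subword x s \<and> length x \<le> p \<and> \<beta> \<ge> 7/3 \<and> is_power \<beta> x)"

lemma SP3: "subword [c,c,c] s \<Longrightarrow> 3 \<le> p \<Longrightarrow> SP p s"
  unfolding SP_def by (rule exI[of _ "[c,c,c]"], rule exI[of _ 3]) (simp add: pow3)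
lemma SP5: "subword [a,b,a,b,a] s \<Longrightarrow> 5 \<le> p \<Longrightarrow> SP p s"
  unfolding SP_def by (rule exI[of _ "[a,b,a,b,a]"], rule exI[of _ "5/2"]) (simp add: pow5)
lemma SP7: "subword [a,b,c,a,b,c,a] s \<Longrightarrow> 7 \<le> p \<Longrightarrow> SP p s"
  unfolding SP_def by (rule exI[of _ "[a,b,c,a,b,c,a]"], rule exI[of _ "7/3"]) (simp add: pow7)
lemma PF3: assumes a: "power_free (7/3) w" and b: "subword [c,c,c] w" shows False
proof -
  have r: "1 \<le> (3::rat)" "7/3 \<le> (3::rat)" by simp_all
  show False using a[unfolded power_free_def, rule_format, of "[c,c,c]" 3] b r pow3[of c] by blast
qed


lemma bin3: "(x::nat) \<in> {0,1} \<Longrightarrow> y \<in> {0,1} \<Longrightarrow> z \<in> {0,1} \<Longrightarrow> x \<noteq> y \<Longrightarrow> y \<noteq> z \<Longrightarrow> x = z"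
  by auto


locale sw =
  fixes s :: "nat list" and p :: nat
  assumes B: "\<And>k. k < length s \<Longrightarrow> s!k \<in> {0,1}"
  and len: "length s = 2*p - 1" and p8: "p \<ge> 8"
  and per: "\<And>k. k + p < length s \<Longrightarrow> s!k = s!(k+p)"
  and N3: "\<And>k. k + 2 < length s \<Longrightarrow> s!k = s!(k+1) \<Longrightarrow> s!(k+1) = s!(k+2) \<Longrightarrow> False"
  and N5: "\<And>k. k+4 < length s \<Longrightarrow> s!k = s!(k+2) \<Longrightarrow> s!(k+1) = s!(k+3) \<Longrightarrow> s!(k+2) = s!(k+4) \<Longrightarrow> False"
  and N7: "\<And>k. k+6 < length s \<Longrightarrow> s!k = s!(k+3) \<Longrightarrow> s!(k+1) = s!(k+4) \<Longrightarrow> s!(k+2) = s!(k+5) \<Longrightarrow> s!(k+3) = s!(k+6) \<Longrightarrow> False"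
begin

lemma pat1:
  assumes j6: "i+7 \<le> length s" and h: "s!(i+1) = s!(i+2)" "s!(i+2) \<noteq> s!(i+3)"
      "s!(i+3) \<noteq> s!(i+4)" "s!(i+4) = s!(i+5)"
  shows False
proof -
  have b: "s!i \<in> {0,1}" "s!(i+1) \<in> {0,1}" "s!(i+3) \<in> {0,1}" "s!(i+6) \<in> {0,1}" "s!(i+5) \<in> {0,1}"
    using B[of i] B[of "i+1"] B[of "i+3"] B[of "i+6"] B[of "i+5"] j6 by auto
  have c1: "s!i \<noteq> s!(i+1)" using N3[of i] h j6 by (auto simp: eval_nat_numeral)
  have c2: "s!(i+5) \<noteq> s!(i+6)" using N3[of "i+4"] h j6 by (auto simp: eval_nat_numeral)
  have b2: "s!(i+2) \<in> {0,1}" "s!(i+4) \<in> {0,1}"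
    using B[of "i+2"] B[of "i+4"] j6 by auto
  have c3: "s!(i+3) \<noteq> s!(i+5)" using h by simp
  have f1: "s!(i+2) = s!(i+4)" using bin3[OF b2(1) b(3) b2(2)] h by auto
  have g1: "s!i = s!(i+3)" using bin3[OF b(1) b(2) b(3)] c1 h by auto
  have g2: "s!(i+1) = s!(i+4)" using f1 h by simp
  have g3: "s!(i+2) = s!(i+5)" using f1 h by simp
  have g4: "s!(i+3) = s!(i+6)" using bin3[OF b(3) b(5) b(4)] c2 c3 by auto
  have l: "i + 6 < length s" using j6 by simp
  show False by (rule N7[OF l g1 _ _ g4]) (use g2 g3 in \<open>simp_all add: eval_nat_numeral\<close>)
qed

lemma pat:
  assumes j4: "j+4 < length s" and h: "s!j = s!(j+1)" "s!(j+1) \<noteq> s!(j+2)"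
      "s!(j+2) \<noteq> s!(j+3)" "s!(j+3) = s!(j+4)"
  shows False
proof -
  have main: False if "i+7 \<le> length s" "\<And>q. q \<le> 4 \<Longrightarrow> s!(i+1+q) = s!(j+q)" for i
  proof -
    have e: "s!(i+1) = s!j" "s!(i+2) = s!(j+1)" "s!(i+3) = s!(j+2)" "s!(i+4) = s!(j+3)" "s!(i+5) = s!(j+4)"
      using that(2)[of 0] that(2)[of 1] that(2)[of 2] that(2)[of 3] that(2)[of 4]
      by (simp_all add: eval_nat_numeral)
    have "s!(i+1) = s!(i+2)" "s!(i+2) \<noteq> s!(i+3)" "s!(i+3) \<noteq> s!(i+4)" "s!(i+4) = s!(i+5)"
      using h e by simp_all
    then show False using pat1[OF that(1)] by blast
  qed
  consider (a) "1 \<le> j \<and> j + 6 \<le> length s" | (b) "j = 0" | (c) "j \<ge> p" "j - p \<ge> 1" "j - p + 6 \<le> length s"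
    using j4 len p8 by linarith
  then show False
  proof cases
    case a
    then have "j - 1 + 7 \<le> length s" by linarith
    moreover have "s!(j-1+1+q) = s!(j+q)" for q using a by simp
    ultimately show False using main[of "j-1"] by blast
  next
    case b
    have "s!(p-1+1+q) = s!(j+q)" if "q \<le> 4" for q
    proof -
      have "q + p < length s" using that len p8 by linarith
      then show ?thesis using per[of q] b p8 by (simp add: add.commute)
    qed
    moreover have "p - 1 + 7 \<le> length s" using len p8 by linarith
    ultimately show False using main[of "p-1"] by blast
  next
    case c
    have "s!(j-p-1+1+q) = s!(j+q)" if "q \<le> 4" for q
    proof -
      have "j - p + q + p < length s" "j-p-1+1+q = j-p+q" "j-p+q+p = j+q" using that len p8 c j4 by linarith+
      then have "s!(j-p+q) = s!(j-p+q+p)" using per[of "j-p+q"] by blast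
      then show ?thesis by (simp only: \<open>j-p-1+1+q = j-p+q\<close> \<open>j-p+q+p = j+q\<close>)
    qed
    moreover have "j - p - 1 + 7 \<le> length s" using c by linarith
    ultimately show False using main[of "j-p-1"] by blast
  qed
qed

lemma noodd: "\<forall>j j'. j < j' \<and> j' - j = d \<and> odd d \<and> j'+1 < length s \<and> s!j = s!(j+1) \<and> s!j' = s!(j'+1) \<longrightarrow> False"
proof (induction d rule: less_induct)
  case (less d)
  show ?case
  proof (intro allI impI)
    fix j j'
    assume a0: "j < j' \<and> j' - j = d \<and> odd d \<and> j'+1 < length s \<and> s!j = s!(j+1) \<and> s!j' = s!(j'+1)"
    then have a1: "j < j'" and a2: "j' - j = d" and a3: "odd d" and a4: "j'+1 < length s"
      and a5: "s!j = s!(j+1)" and a6: "s!j' = s!(j'+1)" by auto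
    show False
    proof (cases "\<exists>k. j < k \<and> k < j' \<and> s!k = s!(k+1)")
      case True
      then obtain k where k: "j < k" "k < j'" "s!k = s!(k+1)" by blast
      have lt: "k - j < d" "j' - k < d" using a1 a2 k by linarith+
      have kl: "k + 1 < length s" using k a4 by linarith
      show False
      proof (cases "odd (k - j)")
        case True
        show False by (rule less.IH[OF lt(1), rule_format, of j k]) (use True k kl a5 in simp)
      next
        case False
        then have o: "odd (j' - k)" using a1 a2 a3 k by presburger
        show False by (rule less.IH[OF lt(2), rule_format, of k j']) (use o k a4 a6 in simp)
      qed
    next
      case False
      then have nd: "\<And>k. j < k \<Longrightarrow> k < j' \<Longrightarrow> s!k \<noteq> s!(k+1)" by blast
      have "d = 1 \<or> d = 3 \<or> d \<ge> 5" using a3 by presburger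
      moreover {
        assume "d = 1"
        then have jj: "j' = j + 1" using a1 a2 by linarith
        have l: "j + 2 < length s" using jj a4 by linarith
        have False by (rule N3[OF l a5]) (use a6 jj in \<open>simp add: eval_nat_numeral\<close>)
      } moreover {
        assume d3: "d = 3"
        then have jj: "j' = j + 3" using a1 a2 by linarith
        have "s!(j+1) \<noteq> s!(j+2)" "s!(j+2) \<noteq> s!(j+3)"
          using nd[of "j+1"] nd[of "j+2"] jj by (simp_all add: eval_nat_numeral)
        moreover have "s!(j+3) = s!(j+4)" using a6 jj by (simp add: eval_nat_numeral)
        moreover have "j + 4 < length s" using a4 jj by linarith
        ultimately have False using pat[of j] a5 by blast
      } moreover {
        assume d5: "d \<ge> 5"
        then have jj: "j + 5 \<le> j'" using a1 a2 by linarith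
        have n: "s!(j+1) \<noteq> s!(j+2)" "s!(j+2) \<noteq> s!(j+3)" "s!(j+3) \<noteq> s!(j+4)" "s!(j+4) \<noteq> s!(j+5)"
          using nd[of "j+1"] nd[of "j+2"] nd[of "j+3"] nd[of "j+4"] jj by (simp_all add: eval_nat_numeral)
        have b: "s!(j+q) \<in> {0,1}" if "q \<le> 5" for q
        proof -
          have "j + q < length s" using that jj a4 by linarith
          then show ?thesis using B by blast
        qed
        have e1: "s!(j+1) = s!(j+3)" using bin3[OF b[of 1] b[of 2] b[of 3]] n by simp
        have e2: "s!(j+2) = s!(j+4)" using bin3[OF b[of 2] b[of 3] b[of 4]] n by simp
        have e3: "s!(j+3) = s!(j+5)" using bin3[OF b[of 3] b[of 4] b[of 5]] n by simp
        have l: "j + 1 + 4 < length s" using jj a4 by linarith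
        have False by (rule N5[OF l]) (use e1 e2 e3 in \<open>simp_all add: eval_nat_numeral\<close>)
      }
      ultimately show False by blast
    qed
  qed
qed

lemma noodd': "j < j' \<Longrightarrow> odd (j' - j) \<Longrightarrow> j'+1 < length s \<Longrightarrow> s!j = s!(j+1) \<Longrightarrow> s!j' = s!(j'+1) \<Longrightarrow> False"
  using noodd[of "j'-j"] by blast

lemma struct: "\<exists>\<delta>\<le>1. \<forall>m. \<delta>+2*m+1 < length s \<longrightarrow> s!(\<delta>+2*m) \<noteq> s!(\<delta>+2*m+1)"
proof (cases "\<exists>j. j+1 < length s \<and> s!j = s!(j+1) \<and> even j")
  case True
  then obtain j where j: "j+1 < length s" "s!j = s!(j+1)" "even j" by blast
  have "\<forall>m. 1+2*m+1 < length s \<longrightarrow> s!(1+2*m) \<noteq> s!(1+2*m+1)"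
  proof (intro allI impI notI)
    fix m assume m: "1+2*m+1 < length s" "s!(1+2*m) = s!(1+2*m+1)"
    show False
    proof (cases "j < 1 + 2*m")
      case True
      have "odd (1+2*m - j)" using True j(3) by presburger
      then show False using noodd'[of j "1+2*m"] True m j by blast
    next
      case False
      then have lt: "1+2*m < j" using j by presburger
      have "odd (j - (1+2*m))" using lt j(3) by presburger
      then show False using noodd'[of "1+2*m" j] lt m j by blast
    qed
  qed
  then show ?thesis by (intro exI[of _ 1]) auto
next
  case False
  then show ?thesis by (intro exI[of _ 0]) auto
qed

end


lemma base: "set w \<subseteq> {0,1} \<Longrightarrow> a \<in> {0,1} \<Longrightarrow> power_free (7/3) w \<Longrightarrow> length w = 4 \<Longrightarrow> SP 5 (w @ [a] @ w)"
proof -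
  assume a: "set w \<subseteq> {0,1}" "a \<in> {0,1}" "power_free (7/3) w" "length w = 4"
  obtain b0 b1 b2 b3 where w: "w = [b0,b1,b2,b3]" using a(4)
    by (auto simp: numeral_eq_Suc length_Suc_conv)
  have bs: "b0 = 0 \<or> b0 = 1" "b1 = 0 \<or> b1 = 1" "b2 = 0 \<or> b2 = 1" "b3 = 0 \<or> b3 = 1" "a = 0 \<or> a = 1"
    using a(1,2) w by auto
  have "subword [0,0,0] w \<or> subword [1,1,1] w \<or> subword [0,0,0] (w @ [a] @ w) \<or> subword [1,1,1] (w @ [a] @ w)
    \<or> subword [0,1,0,1,0] (w @ [a] @ w) \<or> subword [1,0,1,0,1] (w @ [a] @ w)"
    using bs unfolding w subword_sublist
    apply (elim disjE)
    apply (simp_all add: sublist_Cons_right)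
    done
  then show ?thesis using PF3[OF a(3)] SP3[of _ _ 5] SP5[of _ _ _ 5] by fastforce
qed




lemma list3: "(q::nat) < 3 \<Longrightarrow> q = 0 \<or> q = 1 \<or> q = 2" by auto
lemma list5: "(q::nat) < 5 \<Longrightarrow> q = 0 \<or> q = 1 \<or> q = 2 \<or> q = 3 \<or> q = 4" by auto
lemma list7: "(q::nat) < 7 \<Longrightarrow> q = 0 \<or> q = 1 \<or> q = 2 \<or> q = 3 \<or> q = 4 \<or> q = 5 \<or> q = 6" by auto

lemma N3_of: assumes "\<not> SP p s" "3 \<le> p" "k+2 < length s" "s!k = s!(k+1)" "s!(k+1) = s!(k+2)"
  shows False
proof -
  have "\<forall>q<3. [s!k, s!(k+1), s!(k+2)] ! q = s!(k+q)"
  proof (intro allI impI)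
    fix q :: nat assume "q < 3"
    then have "q = 0 \<or> q = 1 \<or> q = 2" by (rule list3)
    then show "[s!k, s!(k+1), s!(k+2)] ! q = s!(k+q)" by (elim disjE) (simp_all add: eval_nat_numeral)
  qed
  moreover have "k + 3 \<le> length s" using assms(3) by simp
  ultimately have "subword [s!k, s!(k+1), s!(k+2)] s" by (intro window[of "[s!k, s!(k+1), s!(k+2)]" 3 k s]) simp_all
  then have "subword [s!k, s!k, s!k] s" using assms(4,5) by simp
  then show False using SP3 assms(1,2) by blast
qed

lemma N5_of: assumes "\<not> SP p s" "5 \<le> p" "k+4 < length s" "s!k = s!(k+2)" "s!(k+1) = s!(k+3)" "s!(k+2) = s!(k+4)"
  shows False
proof -
  have "\<forall>q<5. [s!k, s!(k+1), s!(k+2), s!(k+3), s!(k+4)] ! q = s!(k+q)"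
  proof (intro allI impI)
    fix q :: nat assume "q < 5"
    then have "q = 0 \<or> q = 1 \<or> q = 2 \<or> q = 3 \<or> q = 4" by (rule list5)
    then show "[s!k, s!(k+1), s!(k+2), s!(k+3), s!(k+4)] ! q = s!(k+q)" by (elim disjE) (simp_all add: eval_nat_numeral)
  qed
  moreover have "k + 5 \<le> length s" using assms(3) by simp
  ultimately have "subword [s!k, s!(k+1), s!(k+2), s!(k+3), s!(k+4)] s" by (intro window[of "[s!k, s!(k+1), s!(k+2), s!(k+3), s!(k+4)]" 5 k s]) simp_all
  then have "subword [s!k, s!(k+1), s!k, s!(k+1), s!k] s" using assms(4,5,6) by simp
  then show False using SP5 assms(1,2) by blast
qed

lemma N7_of: assumes "\<not> SP p s" "7 \<le> p" "k+6 < length s" "s!k = s!(k+3)" "s!(k+1) = s!(k+4)" "s!(k+2) = s!(k+5)" "s!(k+3) = s!(k+6)"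
  shows False
proof -
  have "\<forall>q<7. [s!k, s!(k+1), s!(k+2), s!(k+3), s!(k+4), s!(k+5), s!(k+6)] ! q = s!(k+q)"
  proof (intro allI impI)
    fix q :: nat assume "q < 7"
    then have "q = 0 \<or> q = 1 \<or> q = 2 \<or> q = 3 \<or> q = 4 \<or> q = 5 \<or> q = 6" by (rule list7)
    then show "[s!k, s!(k+1), s!(k+2), s!(k+3), s!(k+4), s!(k+5), s!(k+6)] ! q = s!(k+q)" by (elim disjE) (simp_all add: eval_nat_numeral)
  qed
  moreover have "k + 7 \<le> length s" using assms(3) by simp
  ultimately have "subword [s!k, s!(k+1), s!(k+2), s!(k+3), s!(k+4), s!(k+5), s!(k+6)] s" by (intro window[of "[s!k, s!(k+1), s!(k+2), s!(k+3), s!(k+4), s!(k+5), s!(k+6)]" 7 k s]) simp_all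
  then have "subword [s!k, s!(k+1), s!(k+2), s!k, s!(k+1), s!(k+2), s!k] s" using assms(4-7) by simp
  then show False using SP7 assms(1,2) by blast
qed

lemma bin_neq: "(x::nat) \<in> {0,1} \<Longrightarrow> y \<in> {0,1} \<Longrightarrow> x \<noteq> y \<Longrightarrow> y = 1 - x" by auto

lemma main: "set w \<subseteq> {0,1} \<Longrightarrow> a \<in> {0,1} \<Longrightarrow> power_free (7/3) w \<Longrightarrow> length w = 5*2^i - 1
  \<Longrightarrow> SP (5*2^i) (w @ [a] @ w)"
proof (induction i arbitrary: w a)
  case 0
  then show ?case using base by simp
next
  case (Suc i)
  define h where "h = (5::nat) * 2^i"
  have h5: "h \<ge> 5" unfolding h_def by simp
  have hp: "(5::nat) * 2 ^ Suc i = 2 * h" unfolding h_def by simp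
  define s where "s = w @ [a] @ w"
  have lw: "length w = 2*h - 1" using Suc.prems(4) hp by simp
  have lens: "length s = 2*(2*h) - 1" unfolding s_def using lw h5 by simp
  have sets: "set s \<subseteq> {0,1}" unfolding s_def using Suc.prems(1,2) by auto
  have Bs: "\<And>k. k < length s \<Longrightarrow> s!k \<in> {0,1}" using sets nth_mem by blast
  have sw_: "\<And>k. k < length w \<Longrightarrow> s!k = w!k" unfolding s_def by (simp add: nth_append)
  have per: "\<And>k. k + 2*h < length s \<Longrightarrow> s!k = s!(k + 2*h)"
  proof -
    fix k assume k: "k + 2*h < length s"
    have k1: "k < length w" using k lens lw by linarith
    have nl: "\<not> k + 2*h < length w" using lw by linarith
    have "s!(k + 2*h) = (a # w) ! (k + 2*h - length w)" unfolding s_def using nl by (simp add: nth_append)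
    also have "k + 2*h - length w = Suc k" using lw h5 by linarith
    finally have "s!(k + 2*h) = w!k" by simp
    then show "s!k = s!(k + 2*h)" using sw_ k1 by simp
  qed
  show ?case unfolding hp s_def[symmetric]
  proof (rule ccontr)
    assume nsp: "\<not> SP (2*h) s"
    have p3: "3 \<le> 2*h" "5 \<le> 2*h" "7 \<le> 2*h" "8 \<le> 2*h" using h5 by linarith+
    have N3: "\<And>k. k + 2 < length s \<Longrightarrow> s!k = s!(k+1) \<Longrightarrow> s!(k+1) = s!(k+2) \<Longrightarrow> False"
      using N3_of[OF nsp p3(1)] by blast
    have N5: "\<And>k. k+4 < length s \<Longrightarrow> s!k = s!(k+2) \<Longrightarrow> s!(k+1) = s!(k+3) \<Longrightarrow> s!(k+2) = s!(k+4) \<Longrightarrow> False"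
      using N5_of[OF nsp p3(2)] by blast
    have N7: "\<And>k. k+6 < length s \<Longrightarrow> s!k = s!(k+3) \<Longrightarrow> s!(k+1) = s!(k+4) \<Longrightarrow> s!(k+2) = s!(k+5) \<Longrightarrow> s!(k+3) = s!(k+6) \<Longrightarrow> False"
      using N7_of[OF nsp p3(3)] by blast
    have "sw s (2*h)" by (rule sw.intro[OF Bs lens p3(4) per N3 N5 N7])
    then obtain \<delta> where d1: "\<delta> \<le> 1" and dn: "\<And>m. \<delta>+2*m+1 < length s \<Longrightarrow> s!(\<delta>+2*m) \<noteq> s!(\<delta>+2*m+1)"
      using sw.struct by blast
    define t where "t = map (\<lambda>m. s!(\<delta>+2*m)) [0..<2*h-1]"
    have lt: "length t = 2*h - 1" unfolding t_def by simp
    have tn: "\<And>m. m < 2*h - 1 \<Longrightarrow> t!m = s!(\<delta>+2*m)" unfolding t_def by simp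
    have mut: "mu t = take (4*h - 2) (drop \<delta> s)"
    proof (rule nth_equalityI)
      show "length (mu t) = length (take (4*h - 2) (drop \<delta> s))" using lt lens d1 h5 by simp
      fix k assume k: "k < length (mu t)"
      then have k2: "k < 2 * length t" by simp
      have kk: "\<delta> + k < length s" "k < 4*h - 2" using k2 lt lens d1 h5 by linarith+
      have m: "k div 2 < 2*h - 1" using k2 lt by linarith
      have r: "take (4*h - 2) (drop \<delta> s) ! k = s!(\<delta>+k)" using kk by simp
      show "mu t ! k = take (4*h - 2) (drop \<delta> s) ! k"
      proof (cases "even k")
        case True
        then have "\<delta> + 2*(k div 2) = \<delta> + k" by simp
        then show ?thesis using mu_nth[OF k2] True tn[OF m] r by simp
      next
        case False
        then have e: "\<delta> + 2*(k div 2) + 1 = \<delta> + k" by presburger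
        have ne0: "s!(\<delta> + 2*(k div 2)) \<noteq> s!(\<delta> + 2*(k div 2) + 1)" using dn[of "k div 2"] kk e by simp
        have ne: "s!(\<delta> + 2*(k div 2)) \<noteq> s!(\<delta>+k)" using ne0 unfolding e .
        have b1: "s!(\<delta> + 2*(k div 2)) \<in> {0,1}" using Bs kk e by simp
        have b2: "s!(\<delta>+k) \<in> {0,1}" using Bs kk by simp
        have "s!(\<delta>+k) = 1 - s!(\<delta> + 2*(k div 2))" using bin_neq[OF b1 b2 ne] .
        then show ?thesis using mu_nth[OF k2] False tn[OF m] r by simp
      qed
    qed
    have sub_t: "subword (mu t) s" unfolding mut by (rule window0)
    define y where "y = take (h - 1) t"
    define c where "c = t ! (h - 1)"
    have ly: "length y = h - 1" unfolding y_def using lt h5 by simp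
    have tper: "\<And>m. m + h < 2*h - 1 \<Longrightarrow> t!m = t!(m+h)"
    proof -
      fix m assume m: "m + h < 2*h - 1"
      have "t!(m+h) = s!(\<delta> + 2*m + 2*h)" using tn[OF m] by (simp add: algebra_simps)
      also have "\<dots> = s!(\<delta> + 2*m)" using per[of "\<delta> + 2*m"] m d1 lens by simp
      finally show "t!m = t!(m+h)" using tn[of m] m by simp
    qed
    have tdec: "t = y @ [c] @ y"
    proof (rule nth_equalityI)
      show "length t = length (y @ [c] @ y)" using lt ly h5 by simp
      fix q assume q: "q < length t"
      show "t ! q = (y @ [c] @ y) ! q"
      proof (cases "q < h - 1")
        case True
        then have "(y @ [c] @ y) ! q = y ! q" using ly by (simp add: nth_append)
        moreover have "y ! q = t ! q" unfolding y_def using True by simp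
        ultimately show ?thesis by simp
      next
        case False
        show ?thesis
        proof (cases "q = h - 1")
          case True
          then show ?thesis using ly unfolding c_def by (simp add: nth_append)
        next
          case False2: False
          then have q1: "q \<ge> h" using False by linarith
          have n1: "\<not> q < length y" using q1 ly by linarith
          have i1: "q - length y = Suc (q - h)" using q1 ly h5 by linarith
          have "(y @ [c] @ y) ! q = ([c] @ y) ! (q - length y)" unfolding nth_append[of y "[c] @ y" q] using n1 by (simp only: if_False)
          also have "\<dots> = y ! (q - h)" unfolding i1 by simp
          also have "\<dots> = t ! (q - h)" unfolding y_def using q1 q lt by simp
          also have "\<dots> = t ! q" using tper[of "q - h"] q1 q lt by simp
          finally show ?thesis by simp
        qed
      qed
    qed
    have sett: "set t \<subseteq> {0,1}"
    proof
      fix z assume "z \<in> set t"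
      then obtain m where m: "m < length t" "t!m = z" by (auto simp: in_set_conv_nth)
      have "\<delta> + 2*m < length s" using m lt lens d1 by linarith
      then show "z \<in> {0,1}" using Bs tn m lt by auto
    qed
    have "set y \<subseteq> set t" unfolding y_def by (rule set_take_subset)
    then have sety: "set y \<subseteq> {0,1}" using sett by (rule order_trans)
    have "h - 1 < length t" using lt h5 by linarith
    then have "c \<in> set t" unfolding c_def by (rule nth_mem)
    then have cb: "c \<in> {0,1}" by (rule subsetD[OF sett])
    have muy: "mu y = take (2*h - 2) (drop \<delta> s)"
    proof -
      have "mu t = mu y @ mu ([c] @ y)" using tdec by simp
      then have "take (2*h - 2) (mu t) = mu y" using ly h5 by simp
      moreover have "min (2*h - 2) (4*h - 2) = 2*h - 2" by simp
      ultimately show ?thesis unfolding mut take_take by simp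
    qed
    have subw: "subword (mu y) w"
    proof (rule window[of _ "2*h - 2" \<delta>])
      show "length (mu y) = 2*h - 2" using ly by simp
      show "\<delta> + (2*h - 2) \<le> length w" using lw d1 h5 by linarith
      show "\<forall>q<2*h - 2. mu y ! q = w ! (\<delta> + q)"
      proof (intro allI impI)
        fix q assume q: "q < 2*h - 2"
        have q2: "\<delta> + q < length w" "\<delta> + q < length s" using q lw lens d1 h5 by linarith+
        have "mu y ! q = s ! (\<delta> + q)" unfolding muy using q q2 by simp
        also have "\<dots> = w ! (\<delta> + q)" using sw_ q2 by simp
        finally show "mu y ! q = w ! (\<delta> + q)" .
      qed
    qed
    have pfy: "power_free (7/3) y"
      by (rule power_free_mu, rule power_free_sub[OF Suc.prems(3) subw])
    have lyi: "length y = 5 * 2^i - 1" using ly h_def by simp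
    have "SP (5*2^i) (y @ [c] @ y)" using Suc.IH[OF sety cb pfy lyi] .
    then obtain x \<beta> where x: "subword x (y @ [c] @ y)" "length x \<le> h" "\<beta> \<ge> 7/3" "is_power \<beta> x"
      unfolding SP_def h_def by blast
    have "subword (mu x) s" using subword_trans[OF subword_mu[OF x(1)]] sub_t tdec by simp
    moreover have "length (mu x) \<le> 2*h" using x(2) by simp
    moreover have "is_power \<beta> (mu x)" using power_mu[OF x(4)] .
    ultimately have "SP (2*h) s" unfolding SP_def using x(3) by blast
    then show False using nsp by blast
  qed
qed

theorem lemma6:
  fixes i :: nat and w :: "nat list" and a :: nat
  assumes "set w \<subseteq> {0, 1}"
    and "power_free (7/3) w"
    and "length w = 5 * 2 ^ i - 1"
    and "a \<in> {0, 1}"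
  shows "\<exists>x \<beta>. subword x (w @ [a] @ w) \<and> length x \<le> 5 * 2 ^ i \<and>
           \<beta> \<ge> 7/3 \<and> is_power \<beta> x"
  using main[OF assms(1) assms(4) assms(2) assms(3)] unfolding SP_def .

end
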